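(* Let $k>1$ and let $\mathcal P$ be any $k$-pattern in $\mathbb R$ under direct similarity. If $n$ is a positive integer and $r$ is the remainder when $n$ is divided by $k-1$, then $S_{\mathcal P}(n)\le (n-r)(n+r-k+1)/(2k-2)$.
   Context: A direct similarity of $\mathbb R$ is a map $x\mapsto ax+b$ with $a>0$, $b\in\mathbb R$. A $k$-pattern in $\mathbb R$ under direct similarity is the set $\mathcal P$ of all images of a fixed $k$-element set $P_0\subseteq\mathbb R$ under direct similarities. For finite $V\subseteq\mathbb R$, $S_{\mathcal P}(V)=|\{P\subseteq V:P\in\mathcal P\}|$ and $S_{\mathcal P}(n)=\max\{S_{\mathcal P}(V):V\subseteq\mathbb R,\ |V|=n\}$. *)

theory Defs
  imports Complex_Main
begin

definition direct_similarity :: "(real \<Rightarrow> real) \<Rightarrow> bool" where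
  "direct_similarity f \<longleftrightarrow> (\<exists>a b. a > 0 \<and> f = (\<lambda>x. a * x + b))"

definition pattern :: "real set \<Rightarrow> real set set" where
  "pattern P0 = {f ` P0 | f. direct_similarity f}"

definition S_set :: "real set set \<Rightarrow> real set \<Rightarrow> nat" where
  "S_set \<P> V = card {P. P \<subseteq> V \<and> P \<in> \<P>}"

definition S_num :: "real set set \<Rightarrow> nat \<Rightarrow> nat" where
  "S_num \<P> n = Max {S_set \<P> V | V. finite V \<and> card V = n}"

end

theory Submission
  imports Defs
begin

lemma sorted_idx_less:
  fixes xs :: "real list"
  assumes "sorted_wrt (<) xs" "i < length xs" "j < length xs" "xs ! i < xs ! j"
  shows "i < j"
proof (rule ccontr)
  assume "\<not> i < j"
  then have "j < i \<or> j = i" by auto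
  then show False
  proof
    assume "j < i"
    then have "xs ! j < xs ! i" using sorted_wrt_nth_less[OF assms(1) _ assms(2)] by blast
    then show False using assms(4) by simp
  next
    assume "j = i" then show False using assms(4) by simp
  qed
qed

lemma card_pairs_interval:
  "card {(i::nat, j). a \<le> i \<and> i < j \<and> j < b} = (b - a) choose 2"
proof (induction b)
  case 0
  then show ?case by simp
next
  case (Suc b)
  have eq: "{(i::nat, j). a \<le> i \<and> i < j \<and> j < Suc b} =
        {(i, j). a \<le> i \<and> i < j \<and> j < b} \<union> (\<lambda>i. (i, b)) ` {a..<b}"
    by auto
  have fin: "finite {(i::nat, j). a \<le> i \<and> i < j \<and> j < b}"
    by (rule finite_subset[of _ "{..<b} \<times> {..<b}"]) auto
  have disj: "{(i::nat, j). a \<le> i \<and> i < j \<and> j < b} \<inter> (\<lambda>i. (i, b)) ` {a..<b} = {}"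
    by auto
  have "card {(i::nat, j). a \<le> i \<and> i < j \<and> j < Suc b}
        = card {(i, j). a \<le> i \<and> i < j \<and> j < b} + card ((\<lambda>i. (i, b)) ` {a..<b})"
    unfolding eq by (rule card_Un_disjoint[OF fin _ disj]) simp
  also have "card ((\<lambda>i. (i, b)) ` {a..<b}) = b - a"
    by (subst card_image) (auto simp: inj_on_def)
  finally have A0: "card {(i::nat, j). a \<le> i \<and> i < j \<and> j < Suc b} = card {(i, j). a \<le> i \<and> i < j \<and> j < b} + (b - a)" .
  have A: "card {(i::nat, j). a \<le> i \<and> i < j \<and> j < Suc b} = ((b - a) choose 2) + (b - a)"
    using A0 unfolding Suc.IH .
  have B: "(Suc b - a) choose 2 = ((b - a) choose 2) + (b - a)"
  proof (cases "a \<le> b")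
    case True
    then have "Suc b - a = Suc (b - a)" by simp
    have "Suc (b - a) choose 2 = ((b - a) choose 2) + (b - a)"
      using binomial_Suc_Suc[of "b - a" "Suc 0"] by (simp add: numeral_2_eq_2)
    then show ?thesis using \<open>Suc b - a = Suc (b - a)\<close> by simp
  next
    case False
    then show ?thesis by simp
  qed
  show ?case by (metis A B)
qed

lemma exists_block:
  fixes lo idx :: "nat \<Rightarrow> nat"
  assumes "lo 0 = 0" "m > 0" "idx m < lo m"
  shows "\<exists>p<m. lo p \<le> idx p \<and> idx (Suc p) < lo (Suc p)"
proof -
  define P where "P = (\<lambda>p. idx (Suc p) < lo (Suc p))"
  have ex: "P (m - 1)" using assms by (simp add: P_def)
  define p where "p = (LEAST p. P p)"
  have Pp: "P p" unfolding p_def by (rule LeastI[of P, OF ex])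
  have "p \<le> m - 1" unfolding p_def by (rule Least_le[of P, OF ex])
  then have pm: "p < m" using assms(2) by simp
  have "lo p \<le> idx p"
  proof (cases p)
    case 0 then show ?thesis using assms(1) by simp
  next
    case (Suc p0)
    have "\<not> P p0" using Suc p_def not_less_Least by (metis lessI)
    then show ?thesis using Suc by (simp add: P_def)
  qed
  then show ?thesis using pm Pp by (auto simp: P_def)
qed

lemma choose2_real: "real (c choose 2) = real c * (real c - 1) / 2"
proof (induction c)
  case 0 then show ?case by simp
next
  case (Suc c)
  have "Suc c choose 2 = (c choose 2) + c"
    using binomial_Suc_Suc[of c "Suc 0"] by (simp add: numeral_2_eq_2)
  then have "real (Suc c choose 2) = real (c choose 2) + real c" by simp
  also have "\<dots> = real c * (real c - 1) / 2 + real c" using Suc.IH by simp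
  also have "\<dots> = real (Suc c) * (real (Suc c) - 1) / 2" by (simp add: field_simps)
  finally show ?case .
qed

lemma block_sum:
  fixes m q r :: nat
  assumes "r \<le> m"
  shows "(\<Sum>p<m. ((Suc p * q + min (Suc p) r) - (p * q + min p r)) choose 2)
         = r * (Suc q choose 2) + (m - r) * (q choose 2)"
proof -
  have split: "{..<m} = {..<r} \<union> {r..<m}" using assms by auto
  have "(\<Sum>p<m. ((Suc p * q + min (Suc p) r) - (p * q + min p r)) choose 2)
      = (\<Sum>p<r. ((Suc p * q + min (Suc p) r) - (p * q + min p r)) choose 2)
        + (\<Sum>p\<in>{r..<m}. ((Suc p * q + min (Suc p) r) - (p * q + min p r)) choose 2)"
    unfolding split by (rule sum.union_disjoint) auto
  also have "(\<Sum>p<r. ((Suc p * q + min (Suc p) r) - (p * q + min p r)) choose 2)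
      = (\<Sum>p<r. Suc q choose 2)"
    by (rule sum.cong) auto
  also have "(\<Sum>p\<in>{r..<m}. ((Suc p * q + min (Suc p) r) - (p * q + min p r)) choose 2)
      = (\<Sum>p\<in>{r..<m}. q choose 2)"
    by (rule sum.cong) auto
  finally show ?thesis by simp
qed

lemma real_identity:
  fixes m q r n :: nat
  assumes "r \<le> m" "m > 0" "n = m * q + r"
  shows "real (r * (Suc q choose 2) + (m - r) * (q choose 2))
         = (real n - real r) * (real n + real r - real m) / (2 * real m)"
proof -
  have "real (r * (Suc q choose 2) + (m - r) * (q choose 2))
        = real r * (real (Suc q) * (real (Suc q) - 1) / 2) + (real m - real r) * (real q * (real q - 1) / 2)"
    using assms(1) by (simp add: choose2_real of_nat_diff)
  also have "\<dots> = (real n - real r) * (real n + real r - real m) / (2 * real m)"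
    using assms(2) unfolding assms(3) by (simp add: field_simps)
  finally show ?thesis .
qed

lemma dsim_strict:
  assumes "direct_similarity f" "x < y"
  shows "f x < f y"
  using assms unfolding direct_similarity_def by auto

lemma dsim_eq:
  assumes "direct_similarity f" "direct_similarity h" "u \<noteq> w"
    "f u = h u" "f w = h w"
  shows "f = h"
proof -
  obtain a b where f: "a > 0" "f = (\<lambda>x. a * x + b)" using assms(1) unfolding direct_similarity_def by auto
  obtain c d where h: "c > 0" "h = (\<lambda>x. c * x + d)" using assms(2) unfolding direct_similarity_def by auto
  have e1: "a * u + b = c * u + d" and e2: "a * w + b = c * w + d" using assms(4,5) f h by auto
  have "(a - c) * (w - u) = 0" using e1 e2 by (simp add: algebra_simps)
  then have "a = c" using assms(3) by simp
  then have "b = d" using e1 by simp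
  show ?thesis using f h \<open>a = c\<close> \<open>b = d\<close> by simp
qed

lemma count_bound:
  fixes P0 V :: "real set" and m n :: nat and lo :: "nat \<Rightarrow> nat"
  assumes P0: "finite P0" "card P0 = Suc m" and m: "m > 0"
    and V: "finite V" "card V = n"
    and lo0: "lo 0 = 0" and lom: "lo m = n" and lomono: "\<And>p p'. p \<le> p' \<Longrightarrow> lo p \<le> lo p'"
  shows "S_set (pattern P0) V \<le> card {(i, j). \<exists>p<m. lo p \<le> i \<and> i < j \<and> j < lo (Suc p)}"
proof -
  define L0 where "L0 = sorted_list_of_set P0"
  define xs where "xs = sorted_list_of_set V"
  have L0s: "sorted_wrt (<) L0" unfolding L0_def by (rule strict_sorted_list_of_set)
  have L0l: "length L0 = Suc m" unfolding L0_def using P0 by simp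
  have L0set: "set L0 = P0" unfolding L0_def using P0 by simp
  have xss: "sorted_wrt (<) xs" unfolding xs_def by (rule strict_sorted_list_of_set)
  have xsl: "length xs = n" unfolding xs_def using V by simp
  have xsset: "set xs = V" unfolding xs_def using V by simp
  have xsd: "distinct xs" unfolding xs_def by simp
  define Copies where "Copies = {P. P \<subseteq> V \<and> P \<in> pattern P0}"
  define Pairs where "Pairs = {(i, j). \<exists>p<m. lo p \<le> i \<and> i < j \<and> j < lo (Suc p)}"
  define Good where "Good = (\<lambda>P e. \<exists>f p. direct_similarity f \<and> P = f ` P0 \<and> p < m \<and>
      fst e < n \<and> snd e < n \<and> xs ! fst e = f (L0 ! p) \<and> xs ! snd e = f (L0 ! Suc p) \<and>
      lo p \<le> fst e \<and> fst e < snd e \<and> snd e < lo (Suc p))"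
  have finPairs: "finite Pairs"
  proof (rule finite_subset[of _ "{..<n} \<times> {..<n}"])
    show "Pairs \<subseteq> {..<n} \<times> {..<n}"
    proof
      fix e assume "e \<in> Pairs"
      then obtain i j p where e: "e = (i, j)" "p < m" "lo p \<le> i" "i < j" "j < lo (Suc p)"
        unfolding Pairs_def by auto
      have "lo (Suc p) \<le> lo m" using lomono e(2) by simp
      then show "e \<in> {..<n} \<times> {..<n}" using e lom by auto
    qed
  qed auto
  have c1: "\<exists>e. Good P e" if "P \<in> Copies" for P
  proof -
    from that obtain f where f: "direct_similarity f" "P = f ` P0" "P \<subseteq> V"
      unfolding Copies_def pattern_def by auto
    define pts where "pts = (\<lambda>t. f (L0 ! t))"
    have ptsV: "pts t \<in> set xs" if "t \<le> m" for t
    proof -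
      have "L0 ! t \<in> P0" using that L0l L0set nth_mem by (metis le_imp_less_Suc)
      then show ?thesis using f xsset unfolding pts_def by auto
    qed
    define idx where "idx = (\<lambda>t. SOME i. i < n \<and> xs ! i = pts t)"
    have idx: "idx t < n \<and> xs ! idx t = pts t" if "t \<le> m" for t
    proof -
      have "\<exists>i. i < n \<and> xs ! i = pts t" using ptsV[OF that] xsl by (metis in_set_conv_nth)
      then show ?thesis unfolding idx_def by (rule someI_ex)
    qed
    have ptsmono: "pts t < pts (Suc t)" if "t < m" for t
    proof -
      have "L0 ! t < L0 ! Suc t" using sorted_wrt_nth_less[OF L0s, of t "Suc t"] that L0l by simp
      then show ?thesis unfolding pts_def using dsim_strict[OF f(1)] by blast
    qed
    have idxmono: "idx t < idx (Suc t)" if "t < m" for t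
    proof -
      have a: "idx t < n" "xs ! idx t = pts t" using idx[of t] that by auto
      have b: "idx (Suc t) < n" "xs ! idx (Suc t) = pts (Suc t)" using idx[of "Suc t"] that by auto
      show ?thesis using sorted_idx_less[OF xss] a b ptsmono[OF that] xsl by simp
    qed
    have "idx m < lo m" using idx[of m] lom by simp
    then obtain p where p: "p < m" "lo p \<le> idx p" "idx (Suc p) < lo (Suc p)"
      using exists_block[of lo m idx] lo0 m by blast
    have "Good P (idx p, idx (Suc p))"
      unfolding Good_def using f p idx[of p] idx[of "Suc p"] idxmono[OF p(1)]
      by (auto simp: pts_def intro!: exI[of _ f] exI[of _ p])
    then show ?thesis by blast
  qed
  have c2: "e \<in> Pairs" if "Good P e" for P e
    using that unfolding Good_def Pairs_def by (cases e) auto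
  have c3: "P = Q" if g1: "Good P e" and g2: "Good Q e" for P Q e
  proof -
    obtain f p where f: "direct_similarity f" "P = f ` P0" "p < m"
      "fst e < n" "snd e < n" "xs ! fst e = f (L0 ! p)" "xs ! snd e = f (L0 ! Suc p)"
      "lo p \<le> fst e" "fst e < snd e" "snd e < lo (Suc p)"
      using g1 unfolding Good_def by blast
    obtain h p2 where h: "direct_similarity h" "Q = h ` P0" "p2 < m"
      "fst e < n" "snd e < n" "xs ! fst e = h (L0 ! p2)" "xs ! snd e = h (L0 ! Suc p2)"
      "lo p2 \<le> fst e" "fst e < snd e" "snd e < lo (Suc p2)"
      using g2 unfolding Good_def by blast
    have pp: "p = p2"
    proof (rule ccontr)
      assume "p \<noteq> p2"
      then have "Suc p \<le> p2 \<or> Suc p2 \<le> p" by auto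
      then show False
      proof
        assume "Suc p \<le> p2"
        then have "lo (Suc p) \<le> lo p2" by (rule lomono)
        then show False using f h by linarith
      next
        assume "Suc p2 \<le> p"
        then have "lo (Suc p2) \<le> lo p" by (rule lomono)
        then show False using f h by linarith
      qed
    qed
    have lt: "L0 ! p < L0 ! Suc p" using sorted_wrt_nth_less[OF L0s, of p "Suc p"] f(3) L0l by simp
    have "f = h"
      by (rule dsim_eq[OF f(1) h(1), of "L0 ! p" "L0 ! Suc p"]) (use lt f h pp in auto)
    then show ?thesis using f h by simp
  qed
  define \<phi> where "\<phi> = (\<lambda>P. SOME e. Good P e)"
  have G: "Good P (\<phi> P)" if "P \<in> Copies" for P
    unfolding \<phi>_def using c1[OF that] by (rule someI_ex)
  have inj: "inj_on \<phi> Copies"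
  proof (rule inj_onI)
    fix P Q assume "P \<in> Copies" "Q \<in> Copies" "\<phi> P = \<phi> Q"
    then show "P = Q" using G c3 by metis
  qed
  have sub: "\<phi> ` Copies \<subseteq> Pairs" using G c2 by blast
  have "card Copies \<le> card Pairs" by (rule card_inj_on_le[OF inj sub finPairs])
  then show ?thesis unfolding S_set_def Copies_def Pairs_def .
qed

theorem mainTheorem5:
  fixes P0 :: "real set" and k n :: nat
  assumes "finite P0" and "card P0 = k" and "k > 1" and "n > 0"
  shows "real (S_num (pattern P0) n)
           \<le> (real n - real (n mod (k - 1))) * (real n + real (n mod (k - 1)) - real k + 1)
             / (2 * real k - 2)"
proof -
  define m where "m = k - 1"
  have m0: "m > 0" and km: "k = Suc m" using assms(3) unfolding m_def by auto
  define q where "q = n div m"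
  define r where "r = n mod m"
  have rm: "r < m" unfolding r_def using m0 by simp
  have nqr: "n = m * q + r" unfolding q_def r_def by simp
  define lo where "lo = (\<lambda>p. p * q + min p r)"
  have lo0: "lo 0 = 0" unfolding lo_def by simp
  have lom: "lo m = n" unfolding lo_def using rm nqr by (simp add: mult.commute)
  have lomono: "lo p \<le> lo p'" if "p \<le> p'" for p p'
    unfolding lo_def using that by (simp add: add_mono mult_le_mono1)
  define N0 where "N0 = r * (Suc q choose 2) + (m - r) * (q choose 2)"
  have bound: "S_set (pattern P0) V \<le> N0" if V: "finite V" "card V = n" for V
  proof -
    have "S_set (pattern P0) V \<le> card {(i, j). \<exists>p<m. lo p \<le> i \<and> i < j \<and> j < lo (Suc p)}"
      by (rule count_bound[OF assms(1) _ m0 V lo0 lom lomono]) (use assms(2) km in simp_all)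
    also have "{(i, j). \<exists>p<m. lo p \<le> i \<and> i < j \<and> j < lo (Suc p)}
        = (\<Union>p<m. {(i, j). lo p \<le> i \<and> i < j \<and> j < lo (Suc p)})" by auto
    also have "card \<dots> \<le> (\<Sum>p<m. card {(i, j). lo p \<le> i \<and> i < j \<and> j < lo (Suc p)})"
      by (rule card_UN_le) simp
    also have "\<dots> = (\<Sum>p<m. (lo (Suc p) - lo p) choose 2)"
      by (simp add: card_pairs_interval)
    also have "\<dots> = N0" unfolding lo_def N0_def by (rule block_sum) (use rm in simp)
    finally show ?thesis .
  qed
  define A where "A = {S_set (pattern P0) V |V. finite V \<and> card V = n}"
  have Asub: "A \<subseteq> {..N0}" unfolding A_def using bound by auto
  have finA: "finite A" using Asub finite_subset by blast
  have "card (real ` {..<n}) = n" by (subst card_image) (auto simp: inj_on_def)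
  then have "S_set (pattern P0) (real ` {..<n}) \<in> A" unfolding A_def by blast
  then have Ane: "A \<noteq> {}" by blast
  have "S_num (pattern P0) n = Max A" unfolding S_num_def A_def by simp
  also have "Max A \<in> A" by (rule Max_in[OF finA Ane])
  then have "Max A \<le> N0" using Asub by auto
  finally have le: "S_num (pattern P0) n \<le> N0" .
  have "real N0 = (real n - real r) * (real n + real r - real m) / (2 * real m)"
    unfolding N0_def by (rule real_identity[OF _ m0 nqr]) (use rm in simp)
  moreover have "(real n - real (n mod (k - 1))) * (real n + real (n mod (k - 1)) - real k + 1)
             / (2 * real k - 2) = (real n - real r) * (real n + real r - real m) / (2 * real m)"
    unfolding r_def m_def using km by (simp add: algebra_simps)
  ultimately show ?thesis using le by (metis of_nat_le_iff)
qed

end
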